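(* Let $N\ge2$ and let $U(\omega)$, $\omega\in\mathbb{R}$, be a smooth function with values in the $N\times N$ unitary matrices. Then there exist $K\le N(N-1)/2$ pairs of indices $(m_k,n_k)$, $1\le m_k<n_k\le N$, and matrix-valued functions $T_{m_kn_k}(\omega)$, $k=1,\dots,K$, each of which is, for every $\omega$, an $N\times N$ two-level unitary acting on modes $m_k,n_k$, such that $$U(\omega)=\prod_{k=1}^{K}T_{m_kn_k}(\omega)\qquad\text{for all }\omega\in\mathbb{R}.$$
   Context: An $N\times N$ two-level unitary acting on modes $m<n$ is a unitary matrix that coincides with the identity except in the rows and columns $m,n$, where its $2\times2$ submatrix (rows/columns $m,n$) has the form $\begin{pmatrix}\mathrm{e}^{\mathrm{i}\phi}a & -b\\ \mathrm{e}^{\mathrm{i}\phi}b^* & a^*\end{pmatrix}$ with $a,b\in\mathbb{C}$, $|a|^2+|b|^2=1$, $\phi\in\mathbb{R}$ (all allowed to depend on $\omega$). ${}^*$ is complex conjugation. *)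

theory Defs
  imports "HOL-Analysis.Analysis" "Jordan_Normal_Form.Matrix"
begin

definition smooth_fun :: "(real \<Rightarrow> complex) \<Rightarrow> bool" where
  "smooth_fun f \<longleftrightarrow>
     (\<exists>D :: nat \<Rightarrow> real \<Rightarrow> complex. D 0 = f \<and>
        (\<forall>k t. (D k has_vector_derivative D (Suc k) t) (at t)))"

definition adj_mat :: "complex mat \<Rightarrow> complex mat" where
  "adj_mat A = mat (dim_col A) (dim_row A) (\<lambda>(i, j). cnj (A $$ (j, i)))"

definition unitary_mat :: "nat \<Rightarrow> complex mat \<Rightarrow> bool" where
  "unitary_mat N A \<longleftrightarrow> A \<in> carrier_mat N N \<and> A * adj_mat A = 1\<^sub>m N \<and> adj_mat A * A = 1\<^sub>m N"

definition two_level_mat :: "nat \<Rightarrow> nat \<Rightarrow> nat \<Rightarrow> complex \<Rightarrow> complex \<Rightarrow> real \<Rightarrow> complex mat" where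
  "two_level_mat N m n a b \<phi> = mat N N (\<lambda>(i, j).
      if i = m \<and> j = m then cis \<phi> * a
      else if i = m \<and> j = n then - b
      else if i = n \<and> j = m then cis \<phi> * cnj b
      else if i = n \<and> j = n then cnj a
      else if i = j then 1 else 0)"

definition two_level_unitary :: "nat \<Rightarrow> nat \<Rightarrow> nat \<Rightarrow> complex mat \<Rightarrow> bool" where
  "two_level_unitary N m n T \<longleftrightarrow> m < n \<and> n < N \<and> unitary_mat N T \<and>
     (\<exists>a b \<phi>. (cmod a)\<^sup>2 + (cmod b)\<^sup>2 = 1 \<and> T = two_level_mat N m n a b \<phi>)"

end

theory Submission
  imports Defs
begin

lemma mult_entry:
  assumes "dim_col A = N" "dim_row B = N" "i < dim_row A" "j < dim_col B"
  shows "(A * B) $$ (i, j) = (\<Sum>k<N. A $$ (i, k) * B $$ (k, j))"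
  using assms by (simp add: scalar_prod_def lessThan_atLeast0)

lemma sum_two:
  fixes f :: "nat \<Rightarrow> 'a::comm_monoid_add"
  assumes "m \<noteq> n" "m < N" "n < N" "\<And>k. k < N \<Longrightarrow> k \<noteq> m \<Longrightarrow> k \<noteq> n \<Longrightarrow> f k = 0"
  shows "(\<Sum>k<N. f k) = f m + f n"
proof -
  have "(\<Sum>k<N. f k) = (\<Sum>k\<in>{m,n}. f k)"
    by (rule sum.mono_neutral_right) (use assms in auto)
  then show ?thesis using assms by simp
qed

lemma sum_one:
  fixes f :: "nat \<Rightarrow> 'a::comm_monoid_add"
  assumes "m < N" "\<And>k. k < N \<Longrightarrow> k \<noteq> m \<Longrightarrow> f k = 0"
  shows "(\<Sum>k<N. f k) = f m"
proof -
  have "(\<Sum>k<N. f k) = (\<Sum>k\<in>{m}. f k)"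
    by (rule sum.mono_neutral_right) (use assms in auto)
  then show ?thesis using assms by simp
qed

lemma dim_tl[simp]: "dim_row (two_level_mat N m n a b \<phi>) = N" "dim_col (two_level_mat N m n a b \<phi>) = N"
  by (auto simp: two_level_mat_def)

lemma tl_carrier[simp]: "two_level_mat N m n a b \<phi> \<in> carrier_mat N N"
  by (auto simp: two_level_mat_def)

lemma tl_mult:
  assumes "m < n" "n < N" "dim_row M = N" "i < N" "j < dim_col M"
  shows "(two_level_mat N m n a b \<phi> * M) $$ (i, j) =
    (if i = m then cis \<phi> * a * M $$ (m, j) - b * M $$ (n, j)
     else if i = n then cis \<phi> * cnj b * M $$ (m, j) + cnj a * M $$ (n, j)
     else M $$ (i, j))"
proof -
  have e: "(two_level_mat N m n a b \<phi> * M) $$ (i, j) = (\<Sum>k<N. two_level_mat N m n a b \<phi> $$ (i, k) * M $$ (k, j))"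
    using assms by (intro mult_entry) auto
  show ?thesis
  proof (cases "i = m")
    case True
    then show ?thesis unfolding e using assms
      by (subst sum_two[of m n]) (auto simp: two_level_mat_def)
  next
    case f1: False
    show ?thesis
    proof (cases "i = n")
      case True
      then show ?thesis unfolding e using assms f1
        by (subst sum_two[of m n]) (auto simp: two_level_mat_def)
    next
      case False
      then show ?thesis unfolding e using assms f1
        by (subst sum_one[of i]) (auto simp: two_level_mat_def)
    qed
  qed
qed

lemma adj_dims[simp]: "dim_row (adj_mat A) = dim_col A" "dim_col (adj_mat A) = dim_row A"
  by (auto simp: adj_mat_def)

lemma adj_entry[simp]: "i < dim_col A \<Longrightarrow> j < dim_row A \<Longrightarrow> adj_mat A $$ (i, j) = cnj (A $$ (j, i))"
  by (auto simp: adj_mat_def)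

lemma adj_adj[simp]: "adj_mat (adj_mat A) = A"
  by (rule eq_matI) auto

lemma adj_tl:
  assumes "m < n" "n < N"
  shows "adj_mat (two_level_mat N m n a b \<phi>) = two_level_mat N m n (cnj a) (- cis (- \<phi>) * b) (- \<phi>)"
  using assms by (intro eq_matI) (auto simp: two_level_mat_def cis_cnj cis_mult)

lemma norm_eq: "(cmod a)\<^sup>2 + (cmod b)\<^sup>2 = 1 \<Longrightarrow> a * cnj a + b * cnj b = 1"
proof -
  assume h: "(cmod a)\<^sup>2 + (cmod b)\<^sup>2 = 1"
  have "complex_of_real ((cmod a)\<^sup>2 + (cmod b)\<^sup>2) = 1" using h by simp
  then show ?thesis by (simp only: of_real_add complex_norm_square)
qed

lemma cis_cancel[simp]: "cis x * cis (- x) = 1" "cis (- x) * cis x = 1"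
  by (simp_all add: cis_mult)

lemma cis_cancel2[simp]: "cis x * (w * cis (- x)) = w"
  by (metis cis_cancel(1) mult.commute mult.left_commute mult_1_right)

lemma tl_adj_one:
  assumes "m < n" "n < N" "(cmod a)\<^sup>2 + (cmod b)\<^sup>2 = 1"
  shows "two_level_mat N m n a b \<phi> * adj_mat (two_level_mat N m n a b \<phi>) = 1\<^sub>m N"
proof -
  have h: "a * cnj a + b * cnj b = 1" using norm_eq assms(3) .
  have h2: "cnj a * a + cnj b * b = 1" using h by (simp add: mult.commute)
  show ?thesis
    unfolding adj_tl[OF assms(1,2)]
  proof (rule eq_matI)
    fix i j assume ij: "i < dim_row (1\<^sub>m N :: complex mat)" "j < dim_col (1\<^sub>m N :: complex mat)"
    show "(two_level_mat N m n a b \<phi> * two_level_mat N m n (cnj a) (- cis (- \<phi>) * b) (- \<phi>)) $$ (i, j) = 1\<^sub>m N $$ (i, j)"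
      using ij assms(1,2)
      apply (subst tl_mult)
      apply (auto simp: two_level_mat_def cis_cnj)
      apply (simp_all add: algebra_simps h h2)
      done
  qed auto
qed


lemma adj_carrier[simp]: "A \<in> carrier_mat N M \<Longrightarrow> adj_mat A \<in> carrier_mat M N"
  unfolding carrier_mat_def by simp

lemma tl_unitary:
  assumes "m < n" "n < N" "(cmod a)\<^sup>2 + (cmod b)\<^sup>2 = 1"
  shows "two_level_unitary N m n (two_level_mat N m n a b \<phi>)"
proof -
  have n2: "(cmod (cnj a))\<^sup>2 + (cmod (- cis (- \<phi>) * b))\<^sup>2 = 1"
    using assms(3) by (simp add: norm_mult)
  have "adj_mat (two_level_mat N m n a b \<phi>) * two_level_mat N m n a b \<phi>
     = two_level_mat N m n (cnj a) (- cis (- \<phi>) * b) (- \<phi>) * adj_mat (two_level_mat N m n (cnj a) (- cis (- \<phi>) * b) (- \<phi>))"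
  proof -
    have e1: "adj_mat (two_level_mat N m n a b \<phi>) = two_level_mat N m n (cnj a) (- cis (- \<phi>) * b) (- \<phi>)"
      by (rule adj_tl[OF assms(1,2)])
    have e2: "adj_mat (two_level_mat N m n (cnj a) (- cis (- \<phi>) * b) (- \<phi>)) = two_level_mat N m n a b \<phi>"
      by (simp only: e1[symmetric] adj_adj)
    show ?thesis by (simp only: e1 e2)
  qed
  also have "\<dots> = 1\<^sub>m N" by (rule tl_adj_one[OF assms(1,2) n2])
  finally show ?thesis
    using assms tl_adj_one[OF assms] unfolding two_level_unitary_def unitary_mat_def by auto
qed

lemma adj_mult:
  assumes "A \<in> carrier_mat N K" "B \<in> carrier_mat K M"
  shows "adj_mat (A * B) = adj_mat B * adj_mat A"
proof (rule eq_matI)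
  fix i j assume ij: "i < dim_row (adj_mat B * adj_mat A)" "j < dim_col (adj_mat B * adj_mat A)"
  have "adj_mat (A * B) $$ (i, j) = cnj ((A * B) $$ (j, i))" using ij assms by auto
  also have "\<dots> = cnj (\<Sum>k<K. A $$ (j, k) * B $$ (k, i))" using ij assms by (subst mult_entry) auto
  also have "\<dots> = (\<Sum>k<K. adj_mat B $$ (i, k) * adj_mat A $$ (k, j))"
    using ij assms by (auto simp: cnj_sum mult.commute intro!: sum.cong)
  also have "\<dots> = (adj_mat B * adj_mat A) $$ (i, j)" using ij assms by (subst mult_entry) auto
  finally show "adj_mat (A * B) $$ (i, j) = (adj_mat B * adj_mat A) $$ (i, j)" .
qed (use assms in auto)

lemma unitary_mult:
  assumes uA: "unitary_mat N A" and uB: "unitary_mat N B"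
  shows "unitary_mat N (A * B)"
proof -
  have A: "A \<in> carrier_mat N N" "adj_mat A \<in> carrier_mat N N" and B: "B \<in> carrier_mat N N" "adj_mat B \<in> carrier_mat N N"
    using assms unfolding unitary_mat_def by auto
  have AA: "A * adj_mat A = 1\<^sub>m N" "adj_mat A * A = 1\<^sub>m N" using uA unfolding unitary_mat_def by auto
  have BB: "B * adj_mat B = 1\<^sub>m N" "adj_mat B * B = 1\<^sub>m N" using uB unfolding unitary_mat_def by auto
  have ad: "adj_mat (A * B) = adj_mat B * adj_mat A" using adj_mult A B by blast
  have BA: "adj_mat B * adj_mat A \<in> carrier_mat N N" by (rule mult_carrier_mat[OF B(2) A(2)])
  have "A * B * (adj_mat B * adj_mat A) = A * (B * (adj_mat B * adj_mat A))"
    by (rule assoc_mult_mat[OF A(1) B(1) BA])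
  also have "B * (adj_mat B * adj_mat A) = (B * adj_mat B) * adj_mat A"
    by (rule assoc_mult_mat[OF B A(2), symmetric])
  also have "\<dots> = adj_mat A" using A(2) by (simp only: BB(1) left_mult_one_mat)
  also have "A * adj_mat A = 1\<^sub>m N" by (rule AA(1))
  finally have 1: "A * B * adj_mat (A * B) = 1\<^sub>m N" by (simp only: ad)
  have AB: "A * B \<in> carrier_mat N N" by (rule mult_carrier_mat[OF A(1) B(1)])
  have "adj_mat B * adj_mat A * (A * B) = adj_mat B * (adj_mat A * (A * B))"
    by (rule assoc_mult_mat[OF B(2) A(2) AB])
  also have "adj_mat A * (A * B) = (adj_mat A * A) * B"
    by (rule assoc_mult_mat[OF A(2) A(1) B(1), symmetric])
  also have "\<dots> = B" using B(1) by (simp only: AA(2) left_mult_one_mat)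
  also have "adj_mat B * B = 1\<^sub>m N" by (rule BB(2))
  finally have 2: "adj_mat (A * B) * (A * B) = 1\<^sub>m N" by (simp only: ad)
  show ?thesis using 1 2 AB unfolding unitary_mat_def by blast
qed

lemma tl_D_left:
  assumes "m < n" "n < N"
  shows "two_level_mat N m n (cis (- \<theta>)) 0 \<theta> * two_level_mat N m n a b \<phi> = two_level_mat N m n (cis (- \<theta>) * a) b (\<theta> + \<phi>)"
proof (rule eq_matI)
  fix i j assume ij: "i < dim_row (two_level_mat N m n (cis (- \<theta>) * a) b (\<theta> + \<phi>))"
     "j < dim_col (two_level_mat N m n (cis (- \<theta>) * a) b (\<theta> + \<phi>))"
  then show "(two_level_mat N m n (cis (- \<theta>)) 0 \<theta> * two_level_mat N m n a b \<phi>) $$ (i, j) =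
      two_level_mat N m n (cis (- \<theta>) * a) b (\<theta> + \<phi>) $$ (i, j)"
    using assms by (subst tl_mult) (auto simp: two_level_mat_def cis_cnj cis_mult[symmetric] mult.assoc)
qed auto


definition State :: "nat \<Rightarrow> nat \<Rightarrow> nat \<Rightarrow> complex mat \<Rightarrow> bool" where
  "State N s t U \<longleftrightarrow> unitary_mat N U \<and>
     (\<forall>i<N. \<forall>j<N. (i < s \<or> j < s) \<longrightarrow> U $$ (i, j) = (if i = j then 1 else 0)) \<and>
     (\<forall>i<N. s < i \<and> i < t \<longrightarrow> U $$ (i, s) = 0) \<and>
     (s + 1 < t \<longrightarrow> (\<exists>r\<ge>0. U $$ (s, s) = complex_of_real r))"

lemma unitary_carrier: "unitary_mat N U \<Longrightarrow> U \<in> carrier_mat N N"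
  by (simp add: unitary_mat_def)

lemma rotation_gen:
  assumes st: "s < t" "t < N" and S: "State N s t U"
    and nrm: "(cmod a)\<^sup>2 + (cmod b)\<^sup>2 = 1"
    and A1: "cnj b * U $$ (s, s) + cnj a * U $$ (t, s) = 0"
    and A2: "r \<ge> 0" "a * U $$ (s, s) - b * U $$ (t, s) = complex_of_real r"
  shows "State N s (Suc t) (two_level_mat N s t a b 0 * U)"
proof -
  have U: "U \<in> carrier_mat N N" using S unfolding State_def unitary_mat_def by auto
  have E: "(two_level_mat N s t a b 0 * U) $$ (i, j) =
    (if i = s then a * U $$ (s, j) - b * U $$ (t, j)
     else if i = t then cnj b * U $$ (s, j) + cnj a * U $$ (t, j)
     else U $$ (i, j))" if "i < N" "j < N" for i j
    using tl_mult[OF st, of U i j a b 0] that U by auto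
  have un: "unitary_mat N (two_level_mat N s t a b 0 * U)"
    using unitary_mult tl_unitary[OF st nrm, of 0] S
    unfolding State_def two_level_unitary_def by blast
  have id: "\<forall>i<N. \<forall>j<N. (i < s \<or> j < s) \<longrightarrow> (two_level_mat N s t a b 0 * U) $$ (i, j) = (if i = j then 1 else 0)"
  proof (intro allI impI)
    fix i j assume ij: "i < N" "j < N" "i < s \<or> j < s"
    have I: "\<And>i j. i < N \<Longrightarrow> j < N \<Longrightarrow> i < s \<or> j < s \<Longrightarrow> U $$ (i, j) = (if i = j then 1 else 0)"
      using S unfolding State_def by blast
    show "(two_level_mat N s t a b 0 * U) $$ (i, j) = (if i = j then 1 else 0)"
      using ij st I[of s j] I[of t j] I[of i j] by (auto simp: E)
  qed
  have z: "\<forall>i<N. s < i \<and> i < Suc t \<longrightarrow> (two_level_mat N s t a b 0 * U) $$ (i, s) = 0"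
  proof (intro allI impI)
    fix i assume i: "i < N" "s < i \<and> i < Suc t"
    show "(two_level_mat N s t a b 0 * U) $$ (i, s) = 0"
    proof (cases "i = t")
      case True then show ?thesis using i st A1 by (simp add: E)
    next
      case False then show ?thesis using i st S unfolding State_def by (simp add: E)
    qed
  qed
  have re: "\<exists>r\<ge>0. (two_level_mat N s t a b 0 * U) $$ (s, s) = complex_of_real r"
    using A2 st by (auto simp: E)
  show ?thesis unfolding State_def using un id z re by blast
qed

lemma rotation:
  assumes st: "s < t" "t < N" and S: "State N s t U"
  shows "\<exists>a b. (cmod a)\<^sup>2 + (cmod b)\<^sup>2 = 1 \<and> State N s (Suc t) (two_level_mat N s t a b 0 * U)"
proof -
  define x where "x = U $$ (s, s)"
  define y where "y = U $$ (t, s)"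
  define \<rho> where "\<rho> = sqrt ((cmod x)\<^sup>2 + (cmod y)\<^sup>2)"
  show ?thesis
  proof (cases "\<rho> = 0")
    case True
    then have "x = 0" "y = 0" unfolding \<rho>_def
      by (simp_all add: add_nonneg_eq_0_iff)
    then have "State N s (Suc t) (two_level_mat N s t 1 0 0 * U)"
      by (intro rotation_gen[OF st S, of 1 0 0]) (auto simp: x_def y_def)
    then show ?thesis by (intro exI[of _ 1] exI[of _ 0]) simp
  next
    case False
    have "\<rho> \<ge> 0" unfolding \<rho>_def by simp
    then have rp: "\<rho> > 0" using False by linarith
    have r2: "\<rho>\<^sup>2 = (cmod x)\<^sup>2 + (cmod y)\<^sup>2" unfolding \<rho>_def by simp
    have nz: "x = 0 \<longrightarrow> y \<noteq> 0" using rp r2 by auto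
    define a where "a = cnj x / complex_of_real \<rho>"
    define b where "b = - cnj y / complex_of_real \<rho>"
    have nrm: "(cmod a)\<^sup>2 + (cmod b)\<^sup>2 = 1"
      unfolding a_def b_def using rp r2 nz by (simp add: norm_divide power_divide add_divide_distrib[symmetric])
    have A1: "cnj b * x + cnj a * y = 0" unfolding a_def b_def by (simp add: field_simps)
    have "a * x - b * y = (x * cnj x + y * cnj y) / complex_of_real \<rho>"
      unfolding a_def b_def by (simp add: field_simps add_divide_distrib)
    also have "x * cnj x + y * cnj y = complex_of_real (\<rho>\<^sup>2)"
      unfolding r2 by (simp only: of_real_add complex_norm_square)
    also have "complex_of_real (\<rho>\<^sup>2) / complex_of_real \<rho> = complex_of_real \<rho>"
      using rp by (simp add: power2_eq_square)
    finally have A2: "a * x - b * y = complex_of_real \<rho>" .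
    show ?thesis
      by (intro exI[of _ a] exI[of _ b] conjI nrm rotation_gen[OF st S nrm, of \<rho>])
         (use A1 A2 rp in \<open>auto simp: x_def y_def\<close>)
  qed
qed

lemma col_norm:
  assumes "unitary_mat N V" "j < N" "\<forall>i<N. i \<noteq> j \<longrightarrow> V $$ (i, j) = 0"
  shows "cnj (V $$ (j, j)) * V $$ (j, j) = 1"
proof -
  have V: "V \<in> carrier_mat N N" using assms(1) unitary_carrier by blast
  have "1 = (adj_mat V * V) $$ (j, j)" using assms(1,2) unfolding unitary_mat_def by simp
  also have "\<dots> = (\<Sum>k<N. adj_mat V $$ (j, k) * V $$ (k, j))" using V assms(2) by (subst mult_entry) auto
  also have "\<dots> = adj_mat V $$ (j, j) * V $$ (j, j)" using assms V by (subst sum_one[of j]) auto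
  finally show ?thesis using V assms(2) by simp
qed

lemma row_zero:
  assumes "unitary_mat N V" "s < N" "V $$ (s, s) = 1" "\<forall>i<N. i \<noteq> s \<longrightarrow> V $$ (i, s) = 0"
    "j < N" "j \<noteq> s"
  shows "V $$ (s, j) = 0"
proof -
  have V: "V \<in> carrier_mat N N" using assms(1) unitary_carrier by blast
  have "0 = (adj_mat V * V) $$ (j, s)" using assms unfolding unitary_mat_def by simp
  also have "\<dots> = (\<Sum>k<N. adj_mat V $$ (j, k) * V $$ (k, s))" using V assms by (subst mult_entry) auto
  also have "\<dots> = adj_mat V $$ (j, s) * V $$ (s, s)" using assms V by (subst sum_one[of s]) auto
  finally show ?thesis using V assms by simp
qed

lemma lemmaB:
  assumes "s + 1 < N" "State N s N U"
  shows "U $$ (s, s) = 1 \<and> (\<forall>j<N. j \<noteq> s \<longrightarrow> U $$ (s, j) = 0 \<and> U $$ (j, s) = 0)"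
proof -
  have un: "unitary_mat N U" using assms unfolding State_def by blast
  have col: "\<forall>i<N. i \<noteq> s \<longrightarrow> U $$ (i, s) = 0"
  proof (intro allI impI)
    fix i assume "i < N" "i \<noteq> s"
    then show "U $$ (i, s) = 0" using assms unfolding State_def
      by (cases "i < s") auto
  qed
  obtain r where r: "r \<ge> 0" "U $$ (s, s) = complex_of_real r" using assms unfolding State_def by auto
  have "cnj (U $$ (s, s)) * U $$ (s, s) = 1" using col_norm[OF un _ col] assms(1) by simp
  then have "complex_of_real (r * r) = 1" using r by simp
  then have "r * r = 1" using of_real_eq_1_iff by blast
  then have "r = 1" using r(1) power2_eq_1_iff[of r] by (simp add: power2_eq_square)
  then have s1: "U $$ (s, s) = 1" using r by simp
  show ?thesis using s1 col row_zero[OF un _ s1 col] assms(1) by auto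
qed


lemma advance:
  assumes "s + 1 < N" "State N s N U"
  shows "State N (Suc s) (s + 2) U"
proof -
  have B: "U $$ (s, s) = 1" "\<And>j. j < N \<Longrightarrow> j \<noteq> s \<Longrightarrow> U $$ (s, j) = 0 \<and> U $$ (j, s) = 0"
    using lemmaB[OF assms] by auto
  have I: "\<And>i j. i < N \<Longrightarrow> j < N \<Longrightarrow> i < s \<or> j < s \<Longrightarrow> U $$ (i, j) = (if i = j then 1 else 0)"
    using assms(2) unfolding State_def by blast
  have id: "\<forall>i<N. \<forall>j<N. (i < Suc s \<or> j < Suc s) \<longrightarrow> U $$ (i, j) = (if i = j then 1 else 0)"
  proof (intro allI impI)
    fix i j assume ij: "i < N" "j < N" "i < Suc s \<or> j < Suc s"
    show "U $$ (i, j) = (if i = j then 1 else 0)"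
    proof (cases "i < s \<or> j < s")
      case True then show ?thesis using I ij by blast
    next
      case False
      then have "i = s \<or> j = s" using ij by auto
      then show ?thesis using B ij by auto
    qed
  qed
  show ?thesis using assms(2) id unfolding State_def by auto
qed

lemma tl_adj_unitary:
  assumes "m < n" "n < N" "(cmod a)\<^sup>2 + (cmod b)\<^sup>2 = 1"
  shows "two_level_unitary N m n (adj_mat (two_level_mat N m n a b \<phi>))"
proof -
  have n2: "(cmod (cnj a))\<^sup>2 + (cmod (- cis (- \<phi>) * b))\<^sup>2 = 1"
    using assms(3) by (simp add: norm_mult)
  show ?thesis unfolding adj_tl[OF assms(1,2)] by (rule tl_unitary[OF assms(1,2) n2])
qed

inductive prods :: "nat \<Rightarrow> (nat \<times> nat) list \<Rightarrow> complex mat \<Rightarrow> bool" for N where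
  pNil: "prods N [] (1\<^sub>m N)"
| pCons: "two_level_unitary N m n T \<Longrightarrow> prods N ps A \<Longrightarrow> prods N ((m, n) # ps) (T * A)"

lemma prods_carrier: "prods N ps A \<Longrightarrow> A \<in> carrier_mat N N"
  by (induction rule: prods.induct) (auto simp: two_level_unitary_def unitary_mat_def)

lemma inv_step:
  assumes "unitary_mat N H" "U \<in> carrier_mat N N"
  shows "U = adj_mat H * (H * U)"
proof -
  have H: "H \<in> carrier_mat N N" "adj_mat H \<in> carrier_mat N N" using assms unfolding unitary_mat_def by auto
  have "adj_mat H * (H * U) = (adj_mat H * H) * U" using assoc_mult_mat[OF H(2) H(1) assms(2)] by simp
  also have "\<dots> = U" using assms unfolding unitary_mat_def by simp
  finally show ?thesis by simp
qed

lemma special: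
  assumes N: "s + 2 = N" and S: "State N s (s + 1) U"
  shows "prods N [(s, s + 1)] U"
proof -
  define t where "t = s + 1"
  have st: "s < t" "t < N" using N by (auto simp: t_def)
  obtain a b where nrm: "(cmod a)\<^sup>2 + (cmod b)\<^sup>2 = 1"
    and SV: "State N s (Suc t) (two_level_mat N s t a b 0 * U)"
    using rotation[OF st, of U] S unfolding t_def by blast
  define H where "H = two_level_mat N s t a b 0"
  define V where "V = H * U"
  have SV': "State N s N V" using SV N by (simp add: V_def H_def t_def)
  have B: "V $$ (s, s) = 1" "\<And>j. j < N \<Longrightarrow> j \<noteq> s \<Longrightarrow> V $$ (s, j) = 0 \<and> V $$ (j, s) = 0"
    using lemmaB[OF _ SV'] N by auto
  have I: "\<And>i j. i < N \<Longrightarrow> j < N \<Longrightarrow> i < s \<or> j < s \<Longrightarrow> V $$ (i, j) = (if i = j then 1 else 0)"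
    using SV' unfolding State_def by blast
  have unV: "unitary_mat N V" using SV' unfolding State_def by blast
  have colt: "\<forall>i<N. i \<noteq> t \<longrightarrow> V $$ (i, t) = 0"
  proof (intro allI impI)
    fix i assume i: "i < N" "i \<noteq> t"
    then have "i < s \<or> i = s" using N by (auto simp: t_def)
    then show "V $$ (i, t) = 0" using I[of i t] B(2)[of t] st i by auto
  qed
  define c where "c = V $$ (t, t)"
  have "cnj c * c = 1" using col_norm[OF unV st(2) colt] by (simp add: c_def)
  then have "complex_of_real ((cmod c)\<^sup>2) = 1" by (simp only: complex_norm_square mult.commute)
  then have "(cmod c)\<^sup>2 = 1" using of_real_eq_1_iff by blast
  then have cm: "cmod c = 1" using norm_ge_zero[of c] by (auto simp add: power2_eq_1_iff)
  then have "c \<noteq> 0" by auto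
  define \<theta> where "\<theta> = Arg c"
  have cc: "cis \<theta> = c" using Arg_correct[OF \<open>c \<noteq> 0\<close>] cm by (simp add: \<theta>_def sgn_div_norm)
  have VD: "V = two_level_mat N s t (cis (- \<theta>)) 0 \<theta>"
  proof (rule eq_matI)
    fix i j assume ij: "i < dim_row (two_level_mat N s t (cis (- \<theta>)) 0 \<theta>)" "j < dim_col (two_level_mat N s t (cis (- \<theta>)) 0 \<theta>)"
    then have ij': "i < N" "j < N" by auto
    show "V $$ (i, j) = two_level_mat N s t (cis (- \<theta>)) 0 \<theta> $$ (i, j)"
    proof (cases "i < s \<or> j < s")
      case True then show ?thesis using I ij' st by (auto simp: two_level_mat_def)
    next
      case False
      then have "(i = s \<or> i = t) \<and> (j = s \<or> j = t)" using ij' N by (auto simp: t_def)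
      moreover have "V $$ (t, t) = cis \<theta>" using cc c_def by simp
      ultimately show ?thesis using B ij' st by (auto simp: two_level_mat_def cis_cnj)
    qed
  qed (use unV in \<open>auto simp: unitary_mat_def\<close>)
  have adjV: "adj_mat V = two_level_mat N s t (cis (- (- \<theta>))) 0 (- \<theta>)"
    unfolding VD adj_tl[OF st] by (simp add: cis_cnj)
  define G where "G = two_level_mat N s t (cis \<theta> * a) b (- \<theta> + 0)"
  have G: "G = adj_mat V * H"
    unfolding adjV H_def G_def using tl_D_left[OF st, of "- \<theta>" a b 0] by simp
  have nG: "(cmod (cis \<theta> * a))\<^sup>2 + (cmod b)\<^sup>2 = 1" using nrm by (simp add: norm_mult)
  have unG: "unitary_mat N G" using tl_unitary[OF st nG] unfolding G_def two_level_unitary_def by blast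
  have U: "U \<in> carrier_mat N N" using S unfolding State_def unitary_mat_def by auto
  have Hc: "H \<in> carrier_mat N N" by (simp add: H_def)
  have AV: "adj_mat V \<in> carrier_mat N N" using unV unfolding unitary_mat_def by simp
  have "G * U = adj_mat V * (H * U)"
    unfolding G by (rule assoc_mult_mat[OF AV Hc U])
  also have "\<dots> = adj_mat V * V" by (simp only: V_def)
  also have "\<dots> = 1\<^sub>m N" using unV unfolding unitary_mat_def by simp
  finally have GU: "G * U = 1\<^sub>m N" .
  have "U = adj_mat G * (G * U)" by (rule inv_step[OF unG U])
  then have "U = adj_mat G * 1\<^sub>m N" by (simp only: GU)
  moreover have "two_level_unitary N s t (adj_mat G)"
    unfolding G_def by (rule tl_adj_unitary[OF st nG])
  ultimately have "prods N [(s, t)] U" using pCons[OF _ pNil] by simp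
  then show ?thesis by (simp add: t_def)
qed


function L :: "nat \<Rightarrow> nat \<Rightarrow> nat \<Rightarrow> (nat \<times> nat) list" where
  "L N s t = (if N \<le> s + 1 then [] else if t < N then (s, t) # L N s (Suc t) else L N (Suc s) (s + 2))"
  by pat_completeness auto
termination by (relation "measures [\<lambda>(N, s, t). N - s, \<lambda>(N, s, t). N - t]") auto

declare L.simps[simp del]

lemma L_length: "s < t \<Longrightarrow> t \<le> N \<Longrightarrow> 2 * length (L N s t) = 2 * (N - t) + (N - s - 1) * (N - s - 2)"
proof (induction N s t rule: L.induct)
  case (1 N s t)
  show ?case
  proof (cases "N \<le> s + 1")
    case True then show ?thesis using 1(3,4) by (subst L.simps) auto
  next
    case F: False
    show ?thesis
    proof (cases "t < N")
      case True
      then have "2 * length (L N s (Suc t)) = 2 * (N - Suc t) + (N - s - 1) * (N - s - 2)"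
        using 1 F by auto
      then show ?thesis using True F by (subst L.simps) auto
    next
      case False
      then have tN: "t = N" using 1(4) by auto
      obtain d where d: "N = s + 2 + d" using F by (intro that[of "N - s - 2"]) linarith
      have "2 * length (L N (Suc s) (s + 2)) = 2 * (N - (s + 2)) + (N - Suc s - 1) * (N - Suc s - 2)"
        using 1(2)[OF F False] F by auto
      then have "2 * length (L N (Suc s) (s + 2)) = 2 * d + d * (d - 1)" using d by simp
      moreover have "2 * d + d * (d - 1) = (d + 1) * d" by (cases d) auto
      ultimately show ?thesis using F False tN d by (subst L.simps) simp
    qed
  qed
qed

lemma main:
  "s + 1 < N \<Longrightarrow> s < t \<Longrightarrow> t \<le> N \<Longrightarrow> (s + 2 = N \<longrightarrow> t < N) \<Longrightarrow> State N s t U \<Longrightarrow> prods N (L N s t) U"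
proof (induction N s t arbitrary: U rule: L.induct)
  case (1 N s t)
  have F: "\<not> N \<le> s + 1" using 1(3) by auto
  show ?case
  proof (cases "t < N")
    case tN: True
    show ?thesis
    proof (cases "s + 2 = N \<and> Suc t = N")
      case True
      then have "t = s + 1" using 1(4) by auto
      moreover have "L N s t = [(s, s + 1)]"
        using True F tN \<open>t = s + 1\<close> by (simp add: L.simps)
      ultimately show ?thesis using special[of s N U] True 1(7) \<open>t = s + 1\<close> by simp
    next
      case False
      obtain a b where nrm: "(cmod a)\<^sup>2 + (cmod b)\<^sup>2 = 1"
        and SV: "State N s (Suc t) (two_level_mat N s t a b 0 * U)"
        using rotation[OF 1(4) tN 1(7)] by blast
      have st: "s < t" "t < N" using 1(4) tN by auto
      have P: "prods N (L N s (Suc t)) (two_level_mat N s t a b 0 * U)"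
        using 1(1)[OF F tN, of "two_level_mat N s t a b 0 * U"] 1(3,4) tN False SV by auto
      have U: "U \<in> carrier_mat N N" using 1(7) unfolding State_def unitary_mat_def by auto
      have un: "unitary_mat N (two_level_mat N s t a b 0)"
        using tl_unitary[OF st nrm] unfolding two_level_unitary_def by blast
      have Ueq: "adj_mat (two_level_mat N s t a b 0) * (two_level_mat N s t a b 0 * U) = U"
        by (rule inv_step[OF un U, symmetric])
      have "two_level_unitary N s t (adj_mat (two_level_mat N s t a b 0))"
        by (rule tl_adj_unitary[OF st nrm])
      from pCons[OF this P] have "prods N ((s, t) # L N s (Suc t)) U" by (simp only: Ueq)
      moreover have "L N s t = (s, t) # L N s (Suc t)" using F tN by (simp add: L.simps)
      ultimately show ?thesis by simp
    qed
  next
    case False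
    then have tN: "t = N" using 1(5) by auto
    have s2: "s + 2 < N" using 1(6) tN 1(3) by auto
    have "State N (Suc s) (s + 2) U" using advance[OF 1(3)] 1(7) tN by simp
    then have "prods N (L N (Suc s) (s + 2)) U" using 1(2)[OF F False] s2 by auto
    moreover have "L N s t = L N (Suc s) (s + 2)" using F False by (simp add: L.simps)
    ultimately show ?thesis by simp
  qed
qed

lemma prods_list:
  "prods N ps A \<Longrightarrow> \<exists>Ts. length Ts = length ps \<and>
     (\<forall>k<length ps. two_level_unitary N (fst (ps ! k)) (snd (ps ! k)) (Ts ! k)) \<and>
     A = foldr (\<lambda>T B. T * B) Ts (1\<^sub>m N)"
proof (induction rule: prods.induct)
  case pNil then show ?case by simp
next
  case (pCons m n T ps A)
  then obtain Ts where Ts: "length Ts = length ps"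
     "\<forall>k<length ps. two_level_unitary N (fst (ps ! k)) (snd (ps ! k)) (Ts ! k)"
     "A = foldr (\<lambda>T B. T * B) Ts (1\<^sub>m N)" by blast
  show ?case
    by (rule exI[of _ "T # Ts"]) (use Ts pCons(1) in \<open>auto simp: nth_Cons split: nat.splits\<close>)
qed


theorem proposition1:
  fixes N :: nat and U :: "real \<Rightarrow> complex mat"
  assumes "N \<ge> 2"
    and "\<forall>\<omega>. unitary_mat N (U \<omega>)"
    and "\<forall>i<N. \<forall>j<N. smooth_fun (\<lambda>\<omega>. U \<omega> $$ (i, j))"
  shows "\<exists>(K :: nat) (m :: nat \<Rightarrow> nat) (n :: nat \<Rightarrow> nat) (T :: nat \<Rightarrow> real \<Rightarrow> complex mat).
           K \<le> N * (N - 1) div 2 \<and>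
           (\<forall>k<K. m k < n k \<and> n k < N \<and> (\<forall>\<omega>. two_level_unitary N (m k) (n k) (T k \<omega>))) \<and>
           (\<forall>\<omega>. U \<omega> = foldr (\<lambda>k A. T k \<omega> * A) [0..<K] (1\<^sub>m N))"
proof -
  define ps where "ps = L N 0 1"
  define K where "K = length ps"
  have "2 * K = 2 * (N - 1) + (N - 1) * (N - 2)"
    unfolding K_def ps_def using L_length[of 0 1 N] assms(1) by simp
  also have "\<dots> = N * (N - 1)" using assms(1)
    by (cases N; cases "N - 1") (auto simp: algebra_simps)
  finally have K: "K = N * (N - 1) div 2" by simp
  define P where "P = (\<lambda>\<omega> Ts. length Ts = length ps \<and>
     (\<forall>k<length ps. two_level_unitary N (fst (ps ! k)) (snd (ps ! k)) (Ts ! k)) \<and>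
     U \<omega> = foldr (\<lambda>T B. T * B) Ts (1\<^sub>m N))"
  have ex: "\<exists>Ts. P \<omega> Ts" for \<omega>
  proof -
    have "State N 0 1 (U \<omega>)" using assms(2) unfolding State_def by auto
    then have "prods N ps (U \<omega>)" unfolding ps_def using main[of 0 N 1] assms(1) by auto
    then show ?thesis unfolding P_def by (rule prods_list)
  qed
  define Tsf where "Tsf = (\<lambda>\<omega>. SOME Ts. P \<omega> Ts)"
  have PT: "P \<omega> (Tsf \<omega>)" for \<omega> unfolding Tsf_def using ex someI_ex by metis
  define T where "T = (\<lambda>k \<omega>. Tsf \<omega> ! k)"
  define m where "m = (\<lambda>k. fst (ps ! k))"
  define n where "n = (\<lambda>k. snd (ps ! k))"
  have tl: "\<forall>k<K. \<forall>\<omega>. two_level_unitary N (m k) (n k) (T k \<omega>)"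
    using PT unfolding P_def K_def m_def n_def T_def by blast
  have mn: "\<forall>k<K. m k < n k \<and> n k < N"
    using tl unfolding two_level_unitary_def by blast
  have prod: "U \<omega> = foldr (\<lambda>k A. T k \<omega> * A) [0..<K] (1\<^sub>m N)" for \<omega>
  proof -
    have len: "length (Tsf \<omega>) = K" using PT[of \<omega>] unfolding P_def K_def by blast
    have "foldr (\<lambda>k A. T k \<omega> * A) [0..<K] (1\<^sub>m N) = foldr (\<lambda>T B. T * B) (map (\<lambda>k. Tsf \<omega> ! k) [0..<K]) (1\<^sub>m N)"
      by (simp add: foldr_map o_def T_def)
    also have "map (\<lambda>k. Tsf \<omega> ! k) [0..<K] = Tsf \<omega>" using len map_nth[of "Tsf \<omega>"] by simp
    finally show ?thesis using PT[of \<omega>] unfolding P_def by simp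
  qed
  show ?thesis using K tl mn prod by blast
qed

end
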